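(* Let $f:(\mathbb{C}^3,0)\to(\mathbb{C}^3,0)$ be a half corner $$f(x,y,z)=(x+z^c(x+P),\; y+z^{c+1}(\beta+b_xx+b_yy+b_zz+\tilde Q),\; z+z^{c+2}R),$$ with $c\in\mathbb{N}^*$, $\beta,b_x,b_y,b_z\in\mathbb{C}$, $P,\tilde Q\in\mathfrak{m}^2$, and $R=\gamma+O(\mathfrak{m})$ with $\gamma\in\mathbb{C}$. Let $E=\{z=0\}$. - If $\beta\neq0$, then $f$ admits no formal $f$-invariant curve not contained in $E$. - If $\beta=0$ and $b_y\notin\gamma\mathbb{N}^*$, then $f$ admits a unique smooth formal $f$-invariant curve transverse to $E$.
   Context: $\mathfrak{m}$ is the maximal ideal at $0$. Formal curves are irreducible formal curves at $0$; $f$-invariant means mapped to itself by $f$. *)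

theory Defs
  imports "HOL-Computational_Algebra.Formal_Power_Series"
begin

text \<open>Formal power series in three variables x,y,z, given by their coefficient
  function: F i j k is the coefficient of x^i y^j z^k.\<close>
type_synonym mps3 = "nat \<Rightarrow> nat \<Rightarrow> nat \<Rightarrow> complex"

definition in_m2 :: "mps3 \<Rightarrow> bool" where
  "in_m2 F \<longleftrightarrow> (\<forall>i j k. i + j + k < 2 \<longrightarrow> F i j k = 0)"

text \<open>Substitution of one-variable series a,b,d (with zero constant term) into F.
  Only finitely many terms contribute to each coefficient.\<close>
definition mps3_eval :: "mps3 \<Rightarrow> complex fps \<Rightarrow> complex fps \<Rightarrow> complex fps \<Rightarrow> complex fps" where
  "mps3_eval F a b d =
     Abs_fps (\<lambda>n. \<Sum>i\<le>n. \<Sum>j\<le>n. \<Sum>k\<le>n. F i j k * fps_nth (a ^ i * b ^ j * d ^ k) n)"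

type_synonym arc = "complex fps \<times> complex fps \<times> complex fps"

definition formal_arc :: "arc \<Rightarrow> bool" where
  "formal_arc g \<longleftrightarrow> (case g of (a, b, d) \<Rightarrow> fps_nth a 0 = 0 \<and> fps_nth b 0 = 0 \<and> fps_nth d 0 = 0)"

text \<open>The half corner
  f(x,y,z) = (x + z^c (x+P), y + z^(c+1) (beta + bx x + by y + bz z + Q), z + z^(c+2) R),
  applied to a formal arc (i.e. the composition f \<circ> arc).\<close>
definition half_corner ::
  "nat \<Rightarrow> complex \<Rightarrow> complex \<Rightarrow> complex \<Rightarrow> complex \<Rightarrow> mps3 \<Rightarrow> mps3 \<Rightarrow> mps3 \<Rightarrow> arc \<Rightarrow> arc" where
  "half_corner c beta bx by' bz P Q R g = (case g of (a, b, d) \<Rightarrow>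
     (a + d ^ c * (a + mps3_eval P a b d),
      b + d ^ (c + 1) * (fps_const beta + fps_const bx * a + fps_const by' * b
                          + fps_const bz * d + mps3_eval Q a b d),
      d + d ^ (c + 2) * mps3_eval R a b d))"

definition arc_compose :: "arc \<Rightarrow> complex fps \<Rightarrow> arc" where
  "arc_compose g phi = (case g of (a, b, d) \<Rightarrow> (a oo phi, b oo phi, d oo phi))"

definition invariant_arc :: "(arc \<Rightarrow> arc) \<Rightarrow> arc \<Rightarrow> bool" where
  "invariant_arc F g \<longleftrightarrow> formal_arc g \<and> (\<exists>phi. fps_nth phi 0 = 0 \<and> F g = arc_compose g phi)"

end

theory Submission
  imports Defs
begin

notation fps_nth (infixl "\<ominus>" 75)

definition agree :: "nat \<Rightarrow> complex fps \<Rightarrow> complex fps \<Rightarrow> bool" where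
  "agree n f g \<longleftrightarrow> (\<forall>m<n. f \<ominus> m = g \<ominus> m)"

lemma agree_refl[simp]: "agree n f f" by (simp add: agree_def)
lemma agree_sym: "agree n f g \<Longrightarrow> agree n g f" by (simp add: agree_def)
lemma agree_trans: "agree n f g \<Longrightarrow> agree n g h \<Longrightarrow> agree n f h" by (simp add: agree_def)
lemma agree_mono: "agree n f g \<Longrightarrow> m \<le> n \<Longrightarrow> agree m f g" by (simp add: agree_def)
lemma agree_add: "agree n f f' \<Longrightarrow> agree n g g' \<Longrightarrow> agree n (f+g) (f'+g')"
  by (simp add: agree_def)
lemma agree_diff: "agree n f f' \<Longrightarrow> agree n g g' \<Longrightarrow> agree n (f-g) (f'-g')"
  by (simp add: agree_def)
lemma agree_mult: "agree n f f' \<Longrightarrow> agree n g g' \<Longrightarrow> agree n (f*g) (f'*g')"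
  unfolding agree_def fps_mult_nth by (auto intro!: sum.cong)
lemma agree_power: "agree n f g \<Longrightarrow> agree n (f^k) (g^k)"
  by (induct k) (auto intro: agree_mult)
lemma agree_Xpow: "agree n f g \<Longrightarrow> agree (n+s) (fps_X^s*f) (fps_X^s*g)"
  unfolding agree_def fps_X_power_mult_nth by auto
lemma agree_eq: "(\<And>n. agree n f g) \<Longrightarrow> f = g"
  unfolding agree_def fps_eq_iff by auto

lemma X_shift1: "(a::complex fps) \<ominus> 0 = 0 \<Longrightarrow> a = fps_X * fps_shift 1 a"
  by (rule fps_ext) (auto simp: fps_X_mult_nth)

lemma agree_shift1: "agree n a a' \<Longrightarrow> agree (n-1) (fps_shift 1 a) (fps_shift 1 a')"
  unfolding agree_def by auto

lemma agree_mono_m2: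
  assumes "a \<ominus> 0 = 0" "b \<ominus> 0 = 0" "a' \<ominus> 0 = 0" "b' \<ominus> 0 = 0" "agree n a a'" "agree n b b'" "i+j+k \<ge> 2"
  shows "agree (n+1) (a^i*b^j*fps_X^k) (a'^i*b'^j*fps_X^k)"
proof -
  define A where "A = fps_shift 1 a"
  define B where "B = fps_shift 1 b"
  define A' where "A' = fps_shift 1 a'"
  define B' where "B' = fps_shift 1 b'"
  have ha: "a = fps_X*A" unfolding A_def by (rule X_shift1[OF assms(1)])
  have hb: "b = fps_X*B" unfolding B_def by (rule X_shift1[OF assms(2)])
  have ha': "a' = fps_X*A'" unfolding A'_def by (rule X_shift1[OF assms(3)])
  have hb': "b' = fps_X*B'" unfolding B'_def by (rule X_shift1[OF assms(4)])
  have e1: "a^i*b^j*fps_X^k = fps_X^(i+j+k) * (A^i*B^j)"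
    by (subst ha, subst hb) (simp add: power_mult_distrib power_add mult_ac)
  have e2: "a'^i*b'^j*fps_X^k = fps_X^(i+j+k) * (A'^i*B'^j)"
    by (subst ha', subst hb') (simp add: power_mult_distrib power_add mult_ac)
  have "agree (n-1) (A^i*B^j) (A'^i*B'^j)"
    unfolding A_def B_def A'_def B'_def
    by (intro agree_mult agree_power agree_shift1 assms)
  then have "agree (n-1+(i+j+k)) (fps_X^(i+j+k) * (A^i*B^j)) (fps_X^(i+j+k) * (A'^i*B'^j))"
    by (rule agree_Xpow)
  then show ?thesis unfolding e1 e2 by (rule agree_mono) (use assms(7) in auto)
qed

lemma mps3_eval_nth: "mps3_eval F a b d  \<ominus>  n =
   (\<Sum>i\<le>n. \<Sum>j\<le>n. \<Sum>k\<le>n. F i j k * fps_nth (a ^ i * b ^ j * d ^ k) n)"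
  unfolding mps3_eval_def by simp

lemma mps3_eval_0: "a \<ominus> 0 = 0 \<Longrightarrow> b \<ominus> 0 = 0 \<Longrightarrow> d \<ominus> 0 = 0 \<Longrightarrow> mps3_eval F a b d  \<ominus>  0 = F 0 0 0"
  unfolding mps3_eval_nth by simp

lemma mps3_eval_0X: "mps3_eval F a b fps_X  \<ominus>  0 = F 0 0 0"
  unfolding mps3_eval_nth by simp

lemma agree_eval: "agree n a a' \<Longrightarrow> agree n b b' \<Longrightarrow>
   agree n (mps3_eval F a b fps_X) (mps3_eval F a' b' fps_X)"
proof -
  assume h: "agree n a a'" "agree n b b'"
  have "agree n (a^i*b^j*fps_X^k) (a'^i*b'^j*fps_X^k)" for i j k
    by (intro agree_mult agree_power h agree_refl)
  then show ?thesis unfolding agree_def mps3_eval_nth by auto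
qed

lemma agree_eval_m2:
  assumes "in_m2 F" "a \<ominus> 0 = 0" "b \<ominus> 0 = 0" "a' \<ominus> 0 = 0" "b' \<ominus> 0 = 0" "agree n a a'" "agree n b b'"
  shows "agree (n+1) (mps3_eval F a b fps_X) (mps3_eval F a' b' fps_X)"
proof -
  have eq: "F i j k * (a^i*b^j*fps_X^k) \<ominus> m = F i j k * (a'^i*b'^j*fps_X^k) \<ominus> m" if "m < n+1" for i j k m
  proof (cases "i+j+k < 2")
    case True then show ?thesis using assms(1) by (simp add: in_m2_def)
  next
    case False
    then have "agree (n+1) (a^i*b^j*fps_X^k) (a'^i*b'^j*fps_X^k)"
      by (intro agree_mono_m2 assms(2-7)) auto
    then show ?thesis using that by (simp add: agree_def)
  qed
  show ?thesis unfolding agree_def mps3_eval_nth by (intro allI impI sum.cong refl) (simp add: eq)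
qed

lemma eval_m2_0: "in_m2 F \<Longrightarrow> mps3_eval F a b fps_X  \<ominus>  0 = 0"
  by (simp add: mps3_eval_0X in_m2_def)

lemma pow_shape:
  fixes \<psi> \<rho> :: "complex fps"
  assumes "s \<ge> 1" "\<psi> = fps_X + fps_X^(s+1)*\<rho>"
  shows "\<exists>W. \<psi>^i = fps_X^i + fps_X^(i+s)*W \<and> W \<ominus> 0 = of_nat i * \<rho> \<ominus> 0"
proof (induct i)
  case 0 then show ?case by (intro exI[of _ 0]) simp
next
  case (Suc i)
  then obtain W where W: "\<psi>^i = fps_X^i + fps_X^(i+s)*W" "W \<ominus> 0 = of_nat i * \<rho> \<ominus> 0" by blast
  define W' where "W' = W + \<rho> + fps_X^s * (W*\<rho>)"
  have "\<psi>^Suc i = (fps_X^i + fps_X^(i+s)*W) * (fps_X + fps_X^(s+1)*\<rho>)"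
    using W(1) assms(2) by (simp add: mult.commute)
  also have "\<dots> = fps_X^Suc i + fps_X^(Suc i+s)*W'"
    unfolding W'_def by (simp add: algebra_simps power_add)
  finally have 1: "\<psi>^Suc i = fps_X^Suc i + fps_X^(Suc i+s)*W'" .
  have "W' \<ominus> 0 = of_nat (Suc i) * \<rho> \<ominus> 0"
    using assms(1) W(2) unfolding W'_def by (simp add: algebra_simps)
  with 1 show ?case by blast
qed

lemma pow_coeff:
  fixes \<psi> \<rho> :: "complex fps"
  assumes "s \<ge> 1" "\<psi> = fps_X + fps_X^(s+1)*\<rho>"
  shows "N < i + s \<Longrightarrow> (\<psi>^i - fps_X^i) \<ominus> N = 0"
    and "(\<psi>^i - fps_X^i) \<ominus> (i+s) = of_nat i * \<rho> \<ominus> 0"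
proof -
  obtain W where W: "\<psi>^i = fps_X^i + fps_X^(i+s)*W" "W \<ominus> 0 = of_nat i * \<rho> \<ominus> 0"
    using pow_shape[OF assms] by blast
  show "N < i + s \<Longrightarrow> (\<psi>^i - fps_X^i) \<ominus> N = 0"
    using W(1) by (simp add: fps_X_power_mult_nth)
  show "(\<psi>^i - fps_X^i) \<ominus> (i+s) = of_nat i * \<rho> \<ominus> 0"
    using W by (simp add: fps_X_power_mult_nth)
qed

lemma compose_expand: "((a::complex fps) oo \<phi>) \<ominus> N = a \<ominus> N + (\<Sum>i\<le>N. a \<ominus> i * (\<phi>^i - fps_X^i) \<ominus> N)"
proof -
  have "a \<ominus> N = (\<Sum>i\<le>N. a \<ominus> i * (fps_X^i::complex fps) \<ominus> N)"
    by (simp add: mult_delta_right sum.delta)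
  then show ?thesis
    by (simp add: fps_compose_nth atLeast0AtMost algebra_simps sum_subtractf)
qed


context
  fixes c :: nat and bx by' bz gamma :: complex and P Q R :: mps3
begin

definition rho where "rho a b = mps3_eval R a b fps_X"
definition phi where "phi a b = fps_X + fps_X^(c+2) * rho a b"
definition D where "D a b i N = ((phi a b)^i - fps_X^i) \<ominus> N"
definition Ga where "Ga a b n = (\<Sum>i<n. a\<ominus>i * D a b i (n+c)) - mps3_eval P a b fps_X \<ominus> n"
definition Gb where "Gb a b n = (\<Sum>i<n. b\<ominus>i * D a b i (n+c+1)) - (if n=1 then bz else 0)
   - mps3_eval Q a b fps_X \<ominus> n"
definition Bn where "Bn a b n = (if n=0 then 0 else (bx * Ga a b n - Gb a b n)/(of_nat n * gamma - by'))"
definition Sol where "Sol a b \<longleftrightarrow> a\<ominus>0 = 0 \<and> b\<ominus>0 = 0 \<and> (\<forall>n. a\<ominus>n = Ga a b n) \<and> (\<forall>n. b\<ominus>n = Bn a b n)"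
definition T where "T p = (Abs_fps (Ga (fst p) (snd p)), Abs_fps (Bn (fst p) (snd p)))"

lemma phi_form: "phi a b = fps_X + fps_X^((c+1)+1) * rho a b"
  by (simp add: phi_def)

lemma D_low: "N < i + (c+1) \<Longrightarrow> D a b i N = 0"
  unfolding D_def by (rule pow_coeff(1)[OF _ phi_form]) auto

lemma D_diag: "R 0 0 0 = gamma \<Longrightarrow> D a b i (i+(c+1)) = of_nat i * gamma"
  unfolding D_def by (subst pow_coeff(2)[OF _ phi_form]) (auto simp: rho_def mps3_eval_0X)

lemma phi_0: "phi a b \<ominus> 0 = 0" by (simp add: phi_def)

lemma Ga_0: "in_m2 P \<Longrightarrow> Ga a b 0 = 0" by (simp add: Ga_def eval_m2_0)
lemma Gb_0: "in_m2 Q \<Longrightarrow> Gb a b 0 = 0" by (simp add: Gb_def eval_m2_0)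

lemma Ea_iff:
  shows "(a + fps_X^c * (a + mps3_eval P a b fps_X) = a oo phi a b) \<longleftrightarrow> (\<forall>n. a\<ominus>n = Ga a b n)"
proof -
  define L where "L N = (a + fps_X^c * (a + mps3_eval P a b fps_X)) \<ominus> N" for N
  define Rt where "Rt N = (a oo phi a b) \<ominus> N" for N
  have Rt: "Rt N = a\<ominus>N + (\<Sum>i\<le>N. a\<ominus>i * D a b i N)" for N
    unfolding Rt_def D_def by (rule compose_expand)
  have L: "L N = a\<ominus>N + (if N < c then 0 else (a + mps3_eval P a b fps_X)\<ominus>(N-c))" for N
    unfolding L_def by (simp add: fps_X_power_mult_nth)
  have low: "N < c \<Longrightarrow> L N = Rt N" for N
    unfolding L Rt by (auto intro!: sum.neutral D_low)
  have mid: "(\<Sum>i\<le>n+c. a\<ominus>i * D a b i (n+c)) = (\<Sum>i<n. a\<ominus>i * D a b i (n+c))" for n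
    by (rule sum.mono_neutral_right) (auto intro!: D_low)
  have hi: "L (n+c) = Rt (n+c) \<longleftrightarrow> a\<ominus>n = Ga a b n" for n
    unfolding L Rt mid Ga_def by (auto simp: eq_diff_eq)
  have "(a + fps_X^c * (a + mps3_eval P a b fps_X) = a oo phi a b) \<longleftrightarrow> (\<forall>N. L N = Rt N)"
    unfolding L_def Rt_def fps_eq_iff by simp
  also have "\<dots> \<longleftrightarrow> (\<forall>n. L (n+c) = Rt (n+c))"
    by (metis low add.commute le_add_diff_inverse2 not_le)
  finally show ?thesis using hi by simp
qed

lemma Eb_iff:
  assumes "R 0 0 0 = gamma"
  shows "(b + fps_X^(c+1) * (fps_const 0 + fps_const bx * a + fps_const by' * b + fps_const bz * fps_X
            + mps3_eval Q a b fps_X) = b oo phi a b)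
     \<longleftrightarrow> (\<forall>n. (of_nat n * gamma - by') * b\<ominus>n = bx * a\<ominus>n - Gb a b n)"
proof -
  define L where "L N = (b + fps_X^(c+1) * (fps_const 0 + fps_const bx * a + fps_const by' * b + fps_const bz * fps_X
            + mps3_eval Q a b fps_X)) \<ominus> N" for N
  define Rt where "Rt N = (b oo phi a b) \<ominus> N" for N
  have Rt: "Rt N = b\<ominus>N + (\<Sum>i\<le>N. b\<ominus>i * D a b i N)" for N
    unfolding Rt_def D_def by (rule compose_expand)
  have L: "L N = b\<ominus>N + (if N < c+1 then 0 else
     (bx * a\<ominus>(N-(c+1)) + by' * b\<ominus>(N-(c+1)) + (if N-(c+1) = 1 then bz else 0) + mps3_eval Q a b fps_X\<ominus>(N-(c+1))))" for N
    unfolding L_def fps_add_nth fps_X_power_mult_nth by (simp; linarith)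
  have low: "N < c+1 \<Longrightarrow> L N = Rt N" for N
    unfolding L Rt by (auto intro!: sum.neutral D_low)
  have mid: "(\<Sum>i\<le>n+(c+1). b\<ominus>i * D a b i (n+(c+1))) = (\<Sum>i<Suc n. b\<ominus>i * D a b i (n+(c+1)))" for n
    by (rule sum.mono_neutral_right) (auto intro!: D_low)
  have hi: "L (n+(c+1)) = Rt (n+(c+1)) \<longleftrightarrow> (of_nat n * gamma - by') * b\<ominus>n = bx * a\<ominus>n - Gb a b n" for n
    unfolding L Rt mid Gb_def sum.lessThan_Suc D_diag[OF assms]
    by (auto simp: algebra_simps)
  have "(b + fps_X^(c+1) * (fps_const 0 + fps_const bx * a + fps_const by' * b + fps_const bz * fps_X
            + mps3_eval Q a b fps_X) = b oo phi a b) \<longleftrightarrow> (\<forall>N. L N = Rt N)"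
    unfolding L_def Rt_def fps_eq_iff by simp
  also have "\<dots> \<longleftrightarrow> (\<forall>n. L (n+(c+1)) = Rt (n+(c+1)))"
    by (metis low add.commute le_add_diff_inverse2 not_le)
  finally show ?thesis using hi by simp
qed

lemma causal:
  assumes P2: "in_m2 P" and Q2: "in_m2 Q"
    and z: "a\<ominus>0 = 0" "b\<ominus>0 = 0" "a'\<ominus>0 = 0" "b'\<ominus>0 = 0"
    and ag: "agree n a a'" "agree n b b'"
  shows "Ga a b n = Ga a' b' n" "Gb a b n = Gb a' b' n" "Bn a b n = Bn a' b' n"
proof -
  have "agree n (rho a b) (rho a' b')" unfolding rho_def by (rule agree_eval[OF ag])
  then have "agree (n+(c+2)) (fps_X^(c+2) * rho a b) (fps_X^(c+2) * rho a' b')"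
    by (rule agree_Xpow)
  then have "agree (n+(c+2)) (phi a b) (phi a' b')"
    unfolding phi_def by (intro agree_add agree_refl)
  then have "agree (n+(c+2)) ((phi a b)^i - fps_X^i) ((phi a' b')^i - fps_X^i)" for i
    by (intro agree_diff agree_power agree_refl)
  then have Deq: "N < n+(c+2) \<Longrightarrow> D a b i N = D a' b' i N" for i N
    unfolding D_def agree_def by blast
  have Peq: "mps3_eval P a b fps_X \<ominus> n = mps3_eval P a' b' fps_X \<ominus> n"
    using agree_eval_m2[OF P2 z ag] unfolding agree_def by auto
  have Qeq: "mps3_eval Q a b fps_X \<ominus> n = mps3_eval Q a' b' fps_X \<ominus> n"
    using agree_eval_m2[OF Q2 z ag] unfolding agree_def by auto
  have aeq: "i < n \<Longrightarrow> a\<ominus>i = a'\<ominus>i" "i < n \<Longrightarrow> b\<ominus>i = b'\<ominus>i" for i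
    using ag unfolding agree_def by auto
  show 1: "Ga a b n = Ga a' b' n"
    unfolding Ga_def Peq by (intro arg_cong2[where f="(-)"] sum.cong refl) (simp add: aeq Deq)
  show 2: "Gb a b n = Gb a' b' n"
    unfolding Gb_def Qeq by (intro arg_cong2[where f="(-)"] sum.cong refl) (simp add: aeq Deq)
  show "Bn a b n = Bn a' b' n" unfolding Bn_def 1 2 ..
qed

definition agree2 where "agree2 n p q \<longleftrightarrow> agree n (fst p) (fst q) \<and> agree n (snd p) (snd q)"
definition zc where "zc p \<longleftrightarrow> fst p \<ominus> 0 = 0 \<and> snd p \<ominus> 0 = 0"

lemma T_zc: "in_m2 P \<Longrightarrow> zc (T p)"
  by (simp add: zc_def T_def Bn_def Ga_0)

lemma T_causal:
  assumes "in_m2 P" "in_m2 Q" "zc p" "zc q" "agree2 n p q"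
  shows "agree2 (n+1) (T p) (T q)"
proof -
  have z: "fst p \<ominus> 0 = 0" "snd p \<ominus> 0 = 0" "fst q \<ominus> 0 = 0" "snd q \<ominus> 0 = 0"
    using assms(3,4) unfolding zc_def by auto
  have H: "Ga (fst p) (snd p) m = Ga (fst q) (snd q) m" "Bn (fst p) (snd p) m = Bn (fst q) (snd q) m"
    if "m < n+1" for m
  proof -
    have mn: "m \<le> n" using that by simp
    have h1: "agree m (fst p) (fst q)" using assms(5) agree_mono[OF _ mn] unfolding agree2_def by blast
    have h2: "agree m (snd p) (snd q)" using assms(5) agree_mono[OF _ mn] unfolding agree2_def by blast
    show "Ga (fst p) (snd p) m = Ga (fst q) (snd q) m" by (rule causal(1)[OF assms(1,2) z h1 h2])
    show "Bn (fst p) (snd p) m = Bn (fst q) (snd q) m" by (rule causal(3)[OF assms(1,2) z h1 h2])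
  qed
  show ?thesis unfolding agree2_def agree_def T_def fst_conv snd_conv fps_nth_Abs_fps
    using H by blast
qed

lemma agree2_mono: "agree2 n p q \<Longrightarrow> m \<le> n \<Longrightarrow> agree2 m p q"
  unfolding agree2_def using agree_mono by blast
lemma agree2_sym: "agree2 n p q \<Longrightarrow> agree2 n q p"
  unfolding agree2_def using agree_sym by blast
lemma agree2_trans: "agree2 n p q \<Longrightarrow> agree2 n q r \<Longrightarrow> agree2 n p r"
  unfolding agree2_def using agree_trans by blast

lemma agree2_eq: "(\<And>n. agree2 n p q) \<Longrightarrow> p = q"
  unfolding agree2_def by (metis agree_eq prod.expand)

lemma fix_unique:
  assumes "in_m2 P" "in_m2 Q" "zc p" "zc q" "T p = p" "T q = q"
  shows "p = q"
proof (rule agree2_eq)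
  fix n show "agree2 n p q"
  proof (induct n)
    case 0 then show ?case by (simp add: agree2_def agree_def)
  next
    case (Suc n)
    have "agree2 (n+1) (T p) (T q)" by (rule T_causal[OF assms(1-4) Suc])
    then show ?case using assms(5,6) by simp
  qed
qed

lemma fix_exists:
  assumes "in_m2 P" "in_m2 Q"
  shows "\<exists>p. zc p \<and> T p = p"
proof -
  define z where "z k = (T^^k) (0,0)" for k
  have zz: "zc (z k)" for k
    by (cases k) (simp_all add: z_def zc_def T_zc[OF assms(1), unfolded zc_def])
  have zs: "agree2 k (z k) (z (Suc k))" for k
  proof (induct k)
    case 0 then show ?case by (simp add: agree2_def agree_def)
  next
    case (Suc k)
    have "agree2 (k+1) (T (z k)) (T (z (Suc k)))"
      by (rule T_causal[OF assms zz zz Suc])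
    then show ?case by (simp add: z_def)
  qed
  have zm: "agree2 k (z k) (z (k+j))" for k j
  proof (induct j)
    case 0 then show ?case by (simp add: agree2_def)
  next
    case (Suc j)
    have "agree2 k (z (k+j)) (z (Suc (k+j)))"
      by (rule agree2_mono[OF zs[of "k+j"]]) simp
    from agree2_trans[OF Suc this] show ?case by simp
  qed
  define x where "x = (Abs_fps (\<lambda>n. fst (z (Suc n)) \<ominus> n), Abs_fps (\<lambda>n. snd (z (Suc n)) \<ominus> n))"
  have xz: "agree2 k x (z k)" for k
    unfolding agree2_def agree_def
  proof (intro conjI allI impI)
    fix m assume "m < k"
    then obtain j where kj: "k = Suc (m + j)" by (auto simp: less_iff_Suc_add)
    have "agree2 (Suc m) (z (Suc m)) (z (Suc m + j))" by (rule zm)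
    then have "agree2 (Suc m) (z (Suc m)) (z k)" using kj by simp
    then have e: "fst (z (Suc m)) \<ominus> m = fst (z k) \<ominus> m" "snd (z (Suc m)) \<ominus> m = snd (z k) \<ominus> m"
      unfolding agree2_def agree_def by simp_all
    have "fst x \<ominus> m = fst (z (Suc m)) \<ominus> m" "snd x \<ominus> m = snd (z (Suc m)) \<ominus> m"
      unfolding x_def by simp_all
    with e show "fst x \<ominus> m = fst (z k) \<ominus> m" "snd x \<ominus> m = snd (z k) \<ominus> m" by simp_all
  qed
  have xzc: "zc x" using zz[of 1] unfolding x_def zc_def by simp
  have "agree2 n (T x) x" for n
  proof -
    have h1: "agree2 (n+1) (T x) (T (z n))" by (rule T_causal[OF assms xzc zz xz])
    have h2: "T (z n) = z (Suc n)" by (simp add: z_def)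
    have h3: "agree2 (n+1) (z (Suc n)) x" using agree2_sym[OF xz[of "Suc n"]] by simp
    have "agree2 (n+1) (T x) x" using agree2_trans[OF h1[unfolded h2] h3] .
    then show ?thesis by (rule agree2_mono) simp
  qed
  then have "T x = x" by (rule agree2_eq)
  with xzc show ?thesis by blast
qed

lemma Sol_iff_fix:
  assumes "in_m2 P"
  shows "Sol a b \<longleftrightarrow> zc (a,b) \<and> T (a,b) = (a,b)"
proof
  assume "Sol a b" then show "zc (a,b) \<and> T (a,b) = (a,b)"
    unfolding Sol_def zc_def T_def by (auto simp: fps_eq_iff)
next
  assume h: "zc (a,b) \<and> T (a,b) = (a,b)"
  then have "Abs_fps (Ga a b) = a" "Abs_fps (Bn a b) = b" by (auto simp: T_def)
  then have "a\<ominus>n = Ga a b n" "b\<ominus>n = Bn a b n" for n by (metis fps_nth_Abs_fps)+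
  with h show "Sol a b" unfolding Sol_def zc_def by auto
qed

lemma inv_iff:
  assumes "in_m2 P" "in_m2 Q" "R 0 0 0 = gamma" and nores: "\<not> (\<exists>n::nat. n \<ge> 1 \<and> by' = gamma * of_nat n)"
  shows "(a\<ominus>0 = 0 \<and> b\<ominus>0 = 0 \<and> invariant_arc (half_corner c 0 bx by' bz P Q R) (a, b, fps_X))
     \<longleftrightarrow> Sol a b"
proof -
  have "invariant_arc (half_corner c 0 bx by' bz P Q R) (a, b, fps_X) \<longleftrightarrow>
     a\<ominus>0 = 0 \<and> b\<ominus>0 = 0 \<and>
     (a + fps_X^c * (a + mps3_eval P a b fps_X) = a oo phi a b) \<and>
     (b + fps_X^(c+1) * (fps_const 0 + fps_const bx * a + fps_const by' * b + fps_const bz * fps_X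
            + mps3_eval Q a b fps_X) = b oo phi a b)"
  proof -
    have e: "(\<exists>ph. ph\<ominus>0 = 0 \<and> (A, B, phi a b) = (a oo ph, b oo ph, fps_X oo ph))
        \<longleftrightarrow> (A = a oo phi a b \<and> B = b oo phi a b)" for A B
    proof
      assume "\<exists>ph. ph\<ominus>0 = 0 \<and> (A, B, phi a b) = (a oo ph, b oo ph, fps_X oo ph)"
      then obtain ph where "ph\<ominus>0 = 0" "(A, B, phi a b) = (a oo ph, b oo ph, fps_X oo ph)" by blast
      then show "A = a oo phi a b \<and> B = b oo phi a b" by simp
    next
      assume "A = a oo phi a b \<and> B = b oo phi a b"
      then show "\<exists>ph. ph\<ominus>0 = 0 \<and> (A, B, phi a b) = (a oo ph, b oo ph, fps_X oo ph)"
        by (intro exI[of _ "phi a b"]) (simp add: phi_0)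
    qed
    define A where "A = a + fps_X^c * (a + mps3_eval P a b fps_X)"
    define B where "B = b + fps_X^(c+1) * (fps_const 0 + fps_const bx * a + fps_const by' * b + fps_const bz * fps_X
            + mps3_eval Q a b fps_X)"
    have hc: "half_corner c 0 bx by' bz P Q R (a,b,fps_X) = (A, B, phi a b)"
      unfolding half_corner_def phi_def rho_def A_def B_def by simp
    have ac: "arc_compose (a,b,fps_X) ph = (a oo ph, b oo ph, fps_X oo ph)" for ph
      unfolding arc_compose_def by simp
    have fa: "formal_arc (a,b,fps_X) \<longleftrightarrow> a\<ominus>0 = 0 \<and> b\<ominus>0 = 0"
      unfolding formal_arc_def by simp
    show ?thesis
      unfolding invariant_arc_def fa hc ac e A_def[symmetric] B_def[symmetric] by (simp only: conj_assoc)
  qed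
  also have "\<dots> \<longleftrightarrow> a\<ominus>0 = 0 \<and> b\<ominus>0 = 0 \<and> (\<forall>n. a\<ominus>n = Ga a b n) \<and>
      (\<forall>n. (of_nat n * gamma - by') * b\<ominus>n = bx * a\<ominus>n - Gb a b n)"
    by (simp only: Ea_iff Eb_iff[OF assms(3)])
  also have "\<dots> \<longleftrightarrow> Sol a b"
  proof -
    have nz: "n \<ge> 1 \<Longrightarrow> of_nat n * gamma - by' \<noteq> 0" for n
      using nores by (auto simp: mult.commute)
    have key: "(of_nat n * gamma - by') * b\<ominus>n = bx * Ga a b n - Gb a b n \<longleftrightarrow> b\<ominus>n = Bn a b n"
      if "b\<ominus>0 = 0" for n
    proof (cases "n = 0")
      case True then show ?thesis using that by (simp add: Bn_def Gb_0[OF assms(2)] Ga_0[OF assms(1)])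
    next
      case False
      then have "of_nat n * gamma - by' \<noteq> 0" using nz by simp
      then show ?thesis using False by (simp add: Bn_def eq_divide_eq mult.commute)
    qed
    show ?thesis
    proof
      assume H: "a\<ominus>0 = 0 \<and> b\<ominus>0 = 0 \<and> (\<forall>n. a\<ominus>n = Ga a b n) \<and>
        (\<forall>n. (of_nat n * gamma - by') * b\<ominus>n = bx * a\<ominus>n - Gb a b n)"
      have "b\<ominus>n = Bn a b n" for n
      proof -
        have "(of_nat n * gamma - by') * b\<ominus>n = bx * Ga a b n - Gb a b n"
          using H by simp
        then show ?thesis using key H by blast
      qed
      then show "Sol a b" using H unfolding Sol_def by blast
    next
      assume H: "Sol a b"
      have "(of_nat n * gamma - by') * b\<ominus>n = bx * a\<ominus>n - Gb a b n" for n
      proof -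
        have h0: "b\<ominus>0 = 0" "a\<ominus>n = Ga a b n" "b\<ominus>n = Bn a b n" using H unfolding Sol_def by auto
        have "(of_nat n * gamma - by') * b\<ominus>n = bx * Ga a b n - Gb a b n"
          using key[OF h0(1), of n] h0(3) by blast
        then show ?thesis using h0(2) by simp
      qed
      then show "a\<ominus>0 = 0 \<and> b\<ominus>0 = 0 \<and> (\<forall>n. a\<ominus>n = Ga a b n) \<and>
        (\<forall>n. (of_nat n * gamma - by') * b\<ominus>n = bx * a\<ominus>n - Gb a b n)"
        using H unfolding Sol_def by blast
    qed
  qed
  finally have "invariant_arc (half_corner c 0 bx by' bz P Q R) (a, b, fps_X) = Sol a b" .
  then show ?thesis unfolding Sol_def by blast
qed

lemma part2:
  assumes "in_m2 P" "in_m2 Q" "R 0 0 0 = gamma" "\<not> (\<exists>n::nat. n \<ge> 1 \<and> by' = gamma * of_nat n)"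
  shows "\<exists>!(a, b). a\<ominus>0 = 0 \<and> b\<ominus>0 = 0 \<and> invariant_arc (half_corner c 0 bx by' bz P Q R) (a, b, fps_X)"
proof -
  have iff: "(case p of (a, b) \<Rightarrow> a\<ominus>0 = 0 \<and> b\<ominus>0 = 0 \<and> invariant_arc (half_corner c 0 bx by' bz P Q R) (a, b, fps_X))
      \<longleftrightarrow> zc p \<and> T p = p" for p
    by (cases p) (simp only: prod.case inv_iff[OF assms] Sol_iff_fix[OF assms(1)])
  obtain p where p: "zc p \<and> T p = p" using fix_exists[OF assms(1,2)] by blast
  show ?thesis unfolding iff
    by (rule ex1I[of _ p]) (use p fix_unique[OF assms(1,2)] in blast)+
qed

end

lemma agree_compose: "agree n f g \<Longrightarrow> agree n (f oo \<phi>) (g oo \<phi>)"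
  unfolding agree_def fps_compose_nth by (auto intro!: sum.cong)

lemma agree_compose2: "agree n \<psi> \<psi>' \<Longrightarrow> agree n (f oo \<psi>) (f oo \<psi>')"
proof -
  assume h: "agree n \<psi> \<psi>'"
  have "agree n (\<psi>^i) (\<psi>'^i)" for i by (rule agree_power[OF h])
  then show ?thesis unfolding agree_def fps_compose_nth by (auto intro!: sum.cong)
qed

lemma pw:
  fixes \<phi> :: "complex fps"
  assumes "\<phi>\<ominus>0 = 0"
  shows "N < i \<Longrightarrow> (\<phi>^i)\<ominus>N = 0" "(\<phi>^i)\<ominus>i = (\<phi>\<ominus>1)^i"
proof -
  define \<phi>1 where "\<phi>1 = fps_shift 1 \<phi>"
  have e: "\<phi> = fps_X * \<phi>1" unfolding \<phi>1_def by (rule X_shift1[OF assms])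
  have "\<phi>^i = fps_X^i * \<phi>1^i" by (subst e) (simp add: power_mult_distrib)
  then show "N < i \<Longrightarrow> (\<phi>^i)\<ominus>N = 0" "(\<phi>^i)\<ominus>i = (\<phi>\<ominus>1)^i"
    by (simp_all add: fps_X_power_mult_nth fps_power_zeroth \<phi>1_def)
qed

lemma comp_low:
  fixes f \<phi> :: "complex fps"
  assumes "\<phi>\<ominus>0 = 0" "\<And>i. i < v \<Longrightarrow> f\<ominus>i = 0"
  shows "(f oo \<phi>)\<ominus>v = f\<ominus>v * (\<phi>\<ominus>1)^v"
proof -
  have "(f oo \<phi>)\<ominus>v = (\<Sum>i=0..v. f\<ominus>i * (\<phi>^i)\<ominus>v)" by (rule fps_compose_nth)
  also have "\<dots> = (\<Sum>i=0..v. if i = v then f\<ominus>v * (\<phi>\<ominus>1)^v else 0)"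
    by (rule sum.cong) (auto simp: assms(2) pw(2)[OF assms(1)])
  finally show ?thesis by simp
qed

lemma shift_form: "(\<And>i. i < j \<Longrightarrow> (f::complex fps)\<ominus>i = 0) \<Longrightarrow> f = fps_X^j * fps_shift j f"
  by (rule fps_ext) (auto simp: fps_X_power_mult_nth)

lemma part1:
  fixes c :: nat and beta bx by' bz :: complex and P Q R :: mps3
  assumes Q2: "in_m2 Q" and beta: "beta \<noteq> 0" and dnz: "d \<noteq> 0"
    and inv: "invariant_arc (half_corner c beta bx by' bz P Q R) (a, b, d)"
  shows False
proof -
  obtain \<phi> where z: "a\<ominus>0 = 0" "b\<ominus>0 = 0" "d\<ominus>0 = 0" and \<phi>0: "\<phi>\<ominus>0 = 0"
    and eqs: "half_corner c beta bx by' bz P Q R (a, b, d) = (a oo \<phi>, b oo \<phi>, d oo \<phi>)"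
    using inv unfolding invariant_arc_def formal_arc_def arc_compose_def by auto
  define U where "U = fps_const beta + fps_const bx * a + fps_const by' * b + fps_const bz * d + mps3_eval Q a b d"
  define V where "V = mps3_eval R a b d"
  have eqb: "b + d^(c+1) * U = b oo \<phi>" and eqd: "d + d^(c+2) * V = d oo \<phi>"
    using eqs unfolding half_corner_def U_def V_def by simp_all
  have U0: "U\<ominus>0 = beta"
    using z Q2 unfolding U_def by (simp add: mps3_eval_0 in_m2_def)
  define v where "v = subdegree d"
  have v1: "v \<ge> 1" using z(3) dnz unfolding v_def
    by (metis less_one not_le nth_subdegree_nonzero)
  have dlow: "i < v \<Longrightarrow> d\<ominus>i = 0" for i unfolding v_def by (rule nth_less_subdegree_zero)
  define e where "e = fps_shift v d"
  have de: "d = fps_X^v * e" unfolding e_def by (rule shift_form) (rule dlow)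
  have e0: "e\<ominus>0 \<noteq> 0" using dnz unfolding e_def v_def by simp
  define M where "M = v*(c+1)"
  define \<omega> where "\<omega> = \<phi>\<ominus>1"
  have dpow: "d^k = fps_X^(v*k) * e^k" for k
    by (subst de) (simp add: power_mult_distrib power_mult)
  have agd: "agree (M+v) (d oo \<phi>) d"
  proof -
    have ex: "v*(c+2) = M+v" unfolding M_def by simp
    have h: "d^(c+2) * V = fps_X^(M+v) * (e^(c+2) * V)" by (simp only: dpow mult.assoc ex)
    have "m < M+v \<Longrightarrow> (d^(c+2) * V)\<ominus>m = 0" for m
      unfolding h fps_X_power_mult_nth by simp
    then show ?thesis unfolding agree_def eqd[symmetric] by simp
  qed
  have \<omega>v: "\<omega>^v = 1"
  proof -
    have "(d oo \<phi>)\<ominus>v = d\<ominus>v * \<omega>^v" unfolding \<omega>_def by (rule comp_low[OF \<phi>0 dlow])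
    moreover have "v < M+v" using v1 unfolding M_def by simp
    then have "(d oo \<phi>)\<ominus>v = d\<ominus>v" using agd unfolding agree_def by blast
    moreover have "d\<ominus>v \<noteq> 0" using dnz unfolding v_def by simp
    ultimately show ?thesis by simp
  qed
  have \<omega>M: "\<omega>^M = 1" unfolding M_def power_mult \<omega>v by simp
  define \<beta>' where "\<beta>' = (e\<ominus>0)^(c+1) * beta"
  have \<beta>'nz: "\<beta>' \<noteq> 0" unfolding \<beta>'_def using e0 beta by simp
  have agb: "agree (M+1) (b oo \<phi>) (b + fps_const \<beta>' * fps_X^M)"
  proof -
    have h: "d^(c+1) * U = fps_X^M * (e^(c+1) * U)" by (simp only: dpow mult.assoc M_def)
    have "m < M+1 \<Longrightarrow> (d^(c+1) * U)\<ominus>m = (fps_const \<beta>' * fps_X^M)\<ominus>m" for m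
      unfolding h fps_X_power_mult_nth by (auto simp: \<beta>'_def U0 fps_power_zeroth)
    then show ?thesis unfolding agree_def eqb[symmetric] by simp
  qed
  have agphi: "agree (M+1) (\<phi>^M) (fps_X^M)"
    unfolding agree_def using pw[OF \<phi>0] \<omega>M unfolding \<omega>_def
    by (metis fps_X_power_nth less_SucE Suc_eq_plus1 less_irrefl_nat)
  define cp where "cp k = ((\<lambda>g. g oo \<phi>)^^k) fps_X" for k
  have cpS: "cp (Suc k) = cp k oo \<phi>" for k by (simp add: cp_def)
  have cp0: "cp k \<ominus> 0 = 0" for k by (induct k) (simp_all add: cp_def)
  have cp1: "cp k \<ominus> 1 = \<omega>^k" for k
  proof (induct k)
    case 0 then show ?case by (simp add: cp_def)
  next
    case (Suc k)
    have "(cp k oo \<phi>)\<ominus>1 = cp k\<ominus>1 * \<omega>^1" unfolding \<omega>_def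
      by (rule comp_low[OF \<phi>0]) (simp add: cp0)
    then show ?case using Suc.hyps by (simp add: cpS)
  qed
  have agdk: "agree (M+v) (d oo cp k) d" for k
  proof (induct k)
    case 0 then show ?case by (simp add: cp_def)
  next
    case (Suc k)
    have "d oo cp (Suc k) = (d oo cp k) oo \<phi>"
      unfolding cpS by (rule fps_compose_assoc[OF \<phi>0 cp0])
    moreover have "agree (M+v) ((d oo cp k) oo \<phi>) (d oo \<phi>)" by (rule agree_compose[OF Suc])
    ultimately show ?case using agd agree_trans by metis
  qed
  have agbk: "agree (M+1) (b oo cp k) (b + fps_const (of_nat k * \<beta>') * fps_X^M)" for k
  proof (induct k)
    case 0 then show ?case by (simp add: cp_def)
  next
    case (Suc k)
    have "b oo cp (Suc k) = (b oo cp k) oo \<phi>"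
      unfolding cpS by (rule fps_compose_assoc[OF \<phi>0 cp0])
    moreover have "agree (M+1) ((b oo cp k) oo \<phi>) ((b + fps_const (of_nat k * \<beta>') * fps_X^M) oo \<phi>)"
      by (rule agree_compose[OF Suc])
    moreover have "(b + fps_const (of_nat k * \<beta>') * fps_X^M) oo \<phi>
        = (b oo \<phi>) + fps_const (of_nat k * \<beta>') * \<phi>^M"
    proof -
      have "fps_X^M oo \<phi> = \<phi>^M"
        using fps_compose_power[OF \<phi>0, of fps_X M] fps_X_fps_compose_startby0[OF \<phi>0] by simp
      then show ?thesis
        by (simp add: fps_compose_add_distrib fps_const_mult_apply_left[symmetric])
    qed
    moreover have "agree (M+1) ((b oo \<phi>) + fps_const (of_nat k * \<beta>') * \<phi>^M)
         ((b + fps_const \<beta>' * fps_X^M) + fps_const (of_nat k * \<beta>') * fps_X^M)"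
      by (intro agree_add agb agree_mult agree_refl agphi)
    moreover have "(b + fps_const \<beta>' * fps_X^M) + fps_const (of_nat k * \<beta>') * fps_X^M
        = b + fps_const (of_nat (Suc k) * \<beta>') * fps_X^M"
      by (simp add: algebra_simps flip: fps_const_add fps_const_mult)
    ultimately show ?case using agree_trans by metis
  qed
  define \<psi> where "\<psi> = cp v"
  have \<psi>0: "\<psi>\<ominus>0 = 0" unfolding \<psi>_def by (rule cp0)
  have \<psi>1: "\<psi>\<ominus>1 = 1" unfolding \<psi>_def cp1 by (rule \<omega>v)
  have vnz: "(of_nat v :: complex) \<noteq> 0" using v1 by simp
  show False
  proof (cases "\<forall>j. 2 \<le> j \<and> j \<le> M \<longrightarrow> \<psi>\<ominus>j = 0")
    case True
    have "agree (M+1) \<psi> fps_X"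
      unfolding agree_def
    proof (intro allI impI)
      fix m assume "m < M+1"
      then show "\<psi>\<ominus>m = fps_X\<ominus>m"
        using True \<psi>0 \<psi>1 by (cases "m = 0"; cases "m = 1") auto
    qed
    then have "agree (M+1) (b oo \<psi>) (b oo fps_X)" by (rule agree_compose2)
    then have "agree (M+1) (b oo \<psi>) b" by simp
    moreover have "agree (M+1) (b oo \<psi>) (b + fps_const (of_nat v * \<beta>') * fps_X^M)"
      unfolding \<psi>_def by (rule agbk)
    ultimately have "agree (M+1) b (b + fps_const (of_nat v * \<beta>') * fps_X^M)"
      using agree_sym agree_trans by metis
    then have "b\<ominus>M = (b + fps_const (of_nat v * \<beta>') * fps_X^M)\<ominus>M"
      unfolding agree_def by (simp del: fps_add_nth fps_mult_left_const_nth)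
    then have "b\<ominus>M = b\<ominus>M + of_nat v * \<beta>'" by simp
    then show False using vnz \<beta>'nz by simp
  next
    case False
    then have "\<exists>j. 2 \<le> j \<and> j \<le> M \<and> \<psi>\<ominus>j \<noteq> 0" by blast
    then obtain j where j: "2 \<le> j \<and> j \<le> M \<and> \<psi>\<ominus>j \<noteq> 0"
      and jmin: "\<And>i. i < j \<Longrightarrow> \<not> (2 \<le> i \<and> i \<le> M \<and> \<psi>\<ominus>i \<noteq> 0)"
      using exists_least_iff[of "\<lambda>j. 2 \<le> j \<and> j \<le> M \<and> \<psi>\<ominus>j \<noteq> 0"] by blast
    define s where "s = j - 1"
    have s1: "s \<ge> 1" and sM: "s < M" and js: "j = s + 1" using j unfolding s_def by auto
    have low: "i < j \<Longrightarrow> (\<psi> - fps_X)\<ominus>i = 0" for i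
      using jmin[of i] j \<psi>0 \<psi>1 by (cases "i = 0"; cases "i = 1") auto
    define \<rho> where "\<rho> = fps_shift j (\<psi> - fps_X)"
    have "\<psi> - fps_X = fps_X^j * \<rho>" unfolding \<rho>_def by (rule shift_form) (rule low)
    then have \<psi>form: "\<psi> = fps_X + fps_X^(s+1) * \<rho>" unfolding js by (simp add: algebra_simps)
    have \<rho>0: "\<rho>\<ominus>0 \<noteq> 0" using j unfolding \<rho>_def by simp
    have D1: "N < i + s \<Longrightarrow> (\<psi>^i - fps_X^i)\<ominus>N = 0" for i N by (rule pow_coeff(1)[OF s1 \<psi>form])
    have D2: "(\<psi>^v - fps_X^v)\<ominus>(v+s) = of_nat v * \<rho>\<ominus>0" by (rule pow_coeff(2)[OF s1 \<psi>form])
    have "(d oo \<psi>)\<ominus>(v+s) = d\<ominus>(v+s) + (\<Sum>i\<le>v+s. d\<ominus>i * (\<psi>^i - fps_X^i)\<ominus>(v+s))"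
      by (rule compose_expand)
    also have "(\<Sum>i\<le>v+s. d\<ominus>i * (\<psi>^i - fps_X^i)\<ominus>(v+s))
        = (\<Sum>i\<le>v+s. if i = v then d\<ominus>v * (of_nat v * \<rho>\<ominus>0) else 0)"
    proof (rule sum.cong)
      fix i assume "i \<in> {..v+s}"
      show "d\<ominus>i * (\<psi>^i - fps_X^i)\<ominus>(v+s) = (if i = v then d\<ominus>v * (of_nat v * \<rho>\<ominus>0) else 0)"
      proof (cases "i < v")
        case True then show ?thesis by (simp add: dlow)
      next
        case False
        show ?thesis
        proof (cases "i = v")
          case True then show ?thesis by (simp only: True D2 simp_thms if_True)
        next
          case False2: False
          with False have "v + s < i + s" by simp
          then have "(\<psi>^i - fps_X^i)\<ominus>(v+s) = 0" by (rule D1)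
          then show ?thesis using False2 by simp
        qed
      qed
    qed (rule refl)
    also have "\<dots> = d\<ominus>v * (of_nat v * \<rho>\<ominus>0)" by simp
    finally have c1: "(d oo \<psi>)\<ominus>(v+s) = d\<ominus>(v+s) + d\<ominus>v * (of_nat v * \<rho>\<ominus>0)" .
    have "(d oo \<psi>)\<ominus>(v+s) = d\<ominus>(v+s)" using agdk[of v] sM unfolding agree_def \<psi>_def by simp
    with c1 have "d\<ominus>v * (of_nat v * \<rho>\<ominus>0) = 0" by simp
    moreover have "d\<ominus>v \<noteq> 0" using dnz unfolding v_def by simp
    ultimately show False using vnz \<rho>0 by simp
  qed
qed


theorem proposition5p2:
  fixes c :: nat and beta bx by' bz gamma :: complex and P Q R :: mps3
  assumes "c \<ge> 1"
    and "in_m2 P" and "in_m2 Q"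
    and "R 0 0 0 = gamma"
  shows "(beta \<noteq> 0 \<longrightarrow>
           \<not> (\<exists>a b d. d \<noteq> 0 \<and> invariant_arc (half_corner c beta bx by' bz P Q R) (a, b, d)))
       \<and> (beta = 0 \<and> \<not> (\<exists>n::nat. n \<ge> 1 \<and> by' = gamma * of_nat n) \<longrightarrow>
           (\<exists>!(a, b). fps_nth a 0 = 0 \<and> fps_nth b 0 = 0 \<and>
              invariant_arc (half_corner c beta bx by' bz P Q R) (a, b, fps_X)))"
proof (intro conjI impI)
  assume "beta \<noteq> 0"
  then show "\<not> (\<exists>a b d. d \<noteq> 0 \<and> invariant_arc (half_corner c beta bx by' bz P Q R) (a, b, d))"
    using part1[OF assms(3)] by blast
next
  assume h: "beta = 0 \<and> \<not> (\<exists>n::nat. n \<ge> 1 \<and> by' = gamma * of_nat n)"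
  then have b0: "beta = 0" and nr: "\<not> (\<exists>n::nat. n \<ge> 1 \<and> by' = gamma * of_nat n)" by auto
  show "\<exists>!(a, b). fps_nth a 0 = 0 \<and> fps_nth b 0 = 0 \<and>
              invariant_arc (half_corner c beta bx by' bz P Q R) (a, b, fps_X)"
    unfolding b0 by (rule part2[where c=c and bx=bx and bz=bz and P=P and Q=Q and R=R and gamma=gamma and by'=by', OF assms(2,3,4) nr])
qed

end
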